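(* Let $\Omega=[\alpha,\beta]$ with $\alpha<\beta$, and let $q_1,\dots,q_m\in(\alpha,\beta)$ be arbitrary points. Then $F=G_{q_m}G_{q_{m-1}}\cdots G_{q_1}0_\Omega$ is an $\Omega$-tropical polynomial all of whose non-smooth points have multiplicity at most $2$.
   Context: Let $\Omega=[\alpha,\beta]$ be a compact interval with $\alpha<\beta$. An $\Omega$-tropical series is a function $F:\Omega\to[0,\infty)$ with $F(\alpha)=F(\beta)=0$ that can be written as $F(z)=\inf_{v\in\mathbb{Z}}(a_v+zv)$ for some real numbers $a_v$; its canonical coefficients are $a_v=\sup_{z\in\Omega}(F(z)-zv)$. Such $F$ is concave piecewise linear with integer slopes; its non-smooth points are the points of $(\alpha,\beta)$ where $F$ is not differentiable, and the multiplicity of such a point $h$ is $F'(h^-)-F'(h^+)\in\mathbb{Z}_{\ge1}$. An $\Omega$-tropical polynomial is an $\Omega$-tropical series with finitely many non-smooth points. $0_\Omega$ is the zero function on $\Omega$. For $p\in(\alpha,\beta)$ the operator $G_p$ is defined as follows: if $F$ is not differentiable at $p$, then $G_pF=F$; otherwise there is a unique $w\in\mathbb{Z}$ with $F(z)=a_w+zw$ near $p$ ($a_v$ canonical coefficients of $F$), and $G_pF(z)=\inf_{v\in\mathbb{Z}}(b_v+zv)$ for $z\in\Omega$, where $b_v=a_v$ for $v\neq w$ and $b_w=\min_{v\in\mathbb{Z}\setminus\{w\}}(a_v+pv)-pw$. *)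

theory Defs
  imports "HOL-Analysis.Analysis"
begin

text \<open>Omega = {al..be}. Functions are real => real; only their values on Omega matter.\<close>

definition trop_series :: "real \<Rightarrow> real \<Rightarrow> (real \<Rightarrow> real) \<Rightarrow> bool" where
  "trop_series al be F \<longleftrightarrow>
     F al = 0 \<and> F be = 0 \<and> (\<forall>z\<in>{al..be}. F z \<ge> 0) \<and>
     (\<exists>a :: int \<Rightarrow> real. \<forall>z\<in>{al..be}.
        bdd_below (range (\<lambda>v. a v + z * of_int v)) \<and>
        F z = (INF v. a v + z * of_int v))"

definition canon_coeff :: "real \<Rightarrow> real \<Rightarrow> (real \<Rightarrow> real) \<Rightarrow> int \<Rightarrow> real" where
  "canon_coeff al be F v = (SUP z\<in>{al..be}. F z - z * of_int v)"

definition nonsmooth_pts :: "real \<Rightarrow> real \<Rightarrow> (real \<Rightarrow> real) \<Rightarrow> real set" where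
  "nonsmooth_pts al be F = {h \<in> {al<..<be}. \<not> F differentiable (at h)}"

definition left_deriv :: "(real \<Rightarrow> real) \<Rightarrow> real \<Rightarrow> real" where
  "left_deriv F h = Lim (at_left h) (\<lambda>x. (F x - F h) / (x - h))"

definition right_deriv :: "(real \<Rightarrow> real) \<Rightarrow> real \<Rightarrow> real" where
  "right_deriv F h = Lim (at_right h) (\<lambda>x. (F x - F h) / (x - h))"

definition multiplicity_at :: "(real \<Rightarrow> real) \<Rightarrow> real \<Rightarrow> real" where
  "multiplicity_at F h = left_deriv F h - right_deriv F h"

definition trop_poly :: "real \<Rightarrow> real \<Rightarrow> (real \<Rightarrow> real) \<Rightarrow> bool" where
  "trop_poly al be F \<longleftrightarrow> trop_series al be F \<and> finite (nonsmooth_pts al be F)"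

definition G_op :: "real \<Rightarrow> real \<Rightarrow> real \<Rightarrow> (real \<Rightarrow> real) \<Rightarrow> (real \<Rightarrow> real)" where
  "G_op al be p F =
    (if \<not> F differentiable (at p) then F
     else (let a = canon_coeff al be F;
               w = (THE w :: int. eventually (\<lambda>z. F z = a w + z * of_int w) (nhds p));
               b = a(w := (INF v\<in>UNIV - {w}. a v + p * of_int v) - p * of_int w)
           in (\<lambda>z. INF v. b v + z * of_int v)))"

end

theory Submission
  imports Defs
begin


definition mn :: "int set \<Rightarrow> (int \<Rightarrow> real) \<Rightarrow> real \<Rightarrow> real" where
  "mn S c z = Min ((\<lambda>v. c v + z * of_int v) ` S)"

definition act :: "int set \<Rightarrow> (int \<Rightarrow> real) \<Rightarrow> real \<Rightarrow> int set" where
  "act S c z = {v\<in>S. c v + z * of_int v = mn S c z}"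

lemma mn_le: "finite S \<Longrightarrow> v \<in> S \<Longrightarrow> mn S c z \<le> c v + z * of_int v"
  unfolding mn_def by (rule Min_le) auto

lemma mn_in: "finite S \<Longrightarrow> S \<noteq> {} \<Longrightarrow> \<exists>v\<in>S. mn S c z = c v + z * of_int v"
proof -
  assume "finite S" "S \<noteq> {}"
  then have "mn S c z \<in> (\<lambda>v. c v + z * of_int v) ` S" unfolding mn_def by (intro Min_in) auto
  then show ?thesis by auto
qed

lemma act_ne: "finite S \<Longrightarrow> S \<noteq> {} \<Longrightarrow> act S c z \<noteq> {}"
  using mn_in[of S c z] unfolding act_def by force

lemma act_fin: "finite S \<Longrightarrow> finite (act S c z)"
  unfolding act_def by auto

lemma act_sub: "act S c z \<subseteq> S" unfolding act_def by auto

lemma min_lin_le: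
  fixes A :: "int set" and m t :: real
  assumes "finite A" "A \<noteq> {}" "t \<le> 0"
  shows "Min ((\<lambda>v. m + t * of_int v) ` A) = m + t * of_int (Max A)"
proof (rule Min_eqI)
  show "finite ((\<lambda>v. m + t * of_int v) ` A)" using assms by auto
  show "m + t * of_int (Max A) \<in> (\<lambda>v. m + t * of_int v) ` A" using assms by (intro imageI Max_in)
  fix y assume "y \<in> (\<lambda>v. m + t * of_int v) ` A"
  then obtain v where v: "v \<in> A" "y = m + t * of_int v" by auto
  have "v \<le> Max A" using v assms by auto
  hence "of_int v \<le> (of_int (Max A) :: real)" by simp
  hence "t * of_int (Max A) \<le> t * of_int v" using assms(3) by (simp add: mult_left_mono_neg)
  thus "m + t * of_int (Max A) \<le> y" using v by simp
qed

lemma min_lin_ge: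
  fixes A :: "int set" and m t :: real
  assumes "finite A" "A \<noteq> {}" "t \<ge> 0"
  shows "Min ((\<lambda>v. m + t * of_int v) ` A) = m + t * of_int (Min A)"
proof (rule Min_eqI)
  show "finite ((\<lambda>v. m + t * of_int v) ` A)" using assms by auto
  show "m + t * of_int (Min A) \<in> (\<lambda>v. m + t * of_int v) ` A" using assms by (intro imageI Min_in)
  fix y assume "y \<in> (\<lambda>v. m + t * of_int v) ` A"
  then obtain v where v: "v \<in> A" "y = m + t * of_int v" by auto
  have "Min A \<le> v" using v assms by auto
  hence "(of_int (Min A) :: real) \<le> of_int v" by simp
  hence "t * of_int (Min A) \<le> t * of_int v" using assms(3) by (simp add: mult_left_mono)
  thus "m + t * of_int (Min A) \<le> y" using v by simp
qed

lemma loc: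
  assumes S: "finite S" "S \<noteq> {}"
  shows "eventually (\<lambda>y. mn S c y = mn S c z + (y - z) *
           (if y \<le> z then of_int (Max (act S c z)) else of_int (Min (act S c z)))) (nhds z)"
proof -
  define A where "A = act S c z"
  define m where "m = mn S c z"
  have A: "finite A" "A \<noteq> {}" "A \<subseteq> S" using act_ne[OF S] act_fin[OF S(1)] act_sub unfolding A_def by auto
  obtain u0 where u0: "u0 \<in> A" using A by auto
  have u0m: "c u0 + z * of_int u0 = m" using u0 unfolding A_def act_def m_def by auto
  have ev1: "\<forall>u\<in>S - A. eventually (\<lambda>y. c u0 + y * of_int u0 < c u + y * of_int u) (nhds z)"
  proof
    fix u assume u: "u \<in> S - A"
    have "m \<le> c u + z * of_int u" using mn_le[OF S(1)] u unfolding m_def by auto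
    moreover have "c u + z * of_int u \<noteq> m" using u unfolding A_def act_def m_def by auto
    ultimately have gt: "0 < (c u + z * of_int u) - (c u0 + z * of_int u0)" using u0m by auto
    have "((\<lambda>y. (c u + y * of_int u) - (c u0 + y * of_int u0)) \<longlongrightarrow>
           (c u + z * of_int u) - (c u0 + z * of_int u0)) (nhds z)"
      by (intro tendsto_intros filterlim_ident)
    from order_tendstoD(1)[OF this gt]
    show "eventually (\<lambda>y. c u0 + y * of_int u0 < c u + y * of_int u) (nhds z)" by simp
  qed
  have ev: "eventually (\<lambda>y. \<forall>u\<in>S - A. c u0 + y * of_int u0 < c u + y * of_int u) (nhds z)"
    using eventually_ball_finite[OF _ ev1] S(1) by auto
  show ?thesis unfolding A_def[symmetric] m_def[symmetric]
  proof (rule eventually_mono[OF ev])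
    fix y assume H: "\<forall>u\<in>S - A. c u0 + y * of_int u0 < c u + y * of_int u"
    have e1: "mn S c y = Min ((\<lambda>v. c v + y * of_int v) ` A)"
    proof (rule antisym)
      show "mn S c y \<le> Min ((\<lambda>v. c v + y * of_int v) ` A)"
        unfolding mn_def using A S by (intro Min_antimono) auto
      obtain v where v: "v \<in> S" "mn S c y = c v + y * of_int v" using mn_in[OF S] by blast
      show "Min ((\<lambda>v. c v + y * of_int v) ` A) \<le> mn S c y"
      proof (cases "v \<in> A")
        case True thus ?thesis using v A by (intro Min_le) auto
      next
        case False
        have "Min ((\<lambda>v. c v + y * of_int v) ` A) \<le> c u0 + y * of_int u0"
          using u0 A by (intro Min_le) auto
        moreover have "c u0 + y * of_int u0 < c v + y * of_int v" using H v False by blast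
        ultimately show ?thesis using v by linarith
      qed
    qed
    have cA: "\<And>v. v \<in> A \<Longrightarrow> c v + y * of_int v = m + (y - z) * of_int v"
      unfolding A_def act_def m_def by (auto simp: algebra_simps)
    have e2: "Min ((\<lambda>v. c v + y * of_int v) ` A) = Min ((\<lambda>v. m + (y - z) * of_int v) ` A)"
      using cA by (intro arg_cong[where f=Min] image_cong) auto
    show "mn S c y = m + (y - z) * (if y \<le> z then of_int (Max A) else of_int (Min A))"
      using e1 e2 min_lin_le[OF A(1,2), of "y - z" m] min_lin_ge[OF A(1,2), of "y - z" m] by auto
  qed
qed



lemma locF:
  assumes S: "finite S" "S \<noteq> {}" and rep: "\<forall>z\<in>{al..be}. F z = mn S c z"
    and z: "z \<in> {al<..<be}"
  shows "eventually (\<lambda>y. F y = F z + (y - z) *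
           (if y \<le> z then of_int (Max (act S c z)) else of_int (Min (act S c z)))) (nhds z)"
proof -
  have "eventually (\<lambda>y. y \<in> {al<..<be}) (nhds z)"
    using z by (intro eventually_nhds_in_open) auto
  with loc[OF S, of c z] show ?thesis
  proof (rule eventually_elim2)
    fix y assume "mn S c y = mn S c z + (y - z) *
           (if y \<le> z then of_int (Max (act S c z)) else of_int (Min (act S c z)))" "y \<in> {al<..<be}"
    thus "F y = F z + (y - z) *
           (if y \<le> z then of_int (Max (act S c z)) else of_int (Min (act S c z)))"
      using rep z by auto
  qed
qed

lemma quot_left:
  assumes S: "finite S" "S \<noteq> {}" and rep: "\<forall>z\<in>{al..be}. F z = mn S c z"
    and z: "z \<in> {al<..<be}"
  shows "((\<lambda>y. (F y - F z) / (y - z)) \<longlongrightarrow> of_int (Max (act S c z))) (at_left z)"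
proof (rule tendsto_eventually)
  show "eventually (\<lambda>y. (F y - F z) / (y - z) = of_int (Max (act S c z))) (at_left z)"
    unfolding eventually_at_filter
    by (rule eventually_mono[OF locF[OF assms]]) auto
qed

lemma quot_right:
  assumes S: "finite S" "S \<noteq> {}" and rep: "\<forall>z\<in>{al..be}. F z = mn S c z"
    and z: "z \<in> {al<..<be}"
  shows "((\<lambda>y. (F y - F z) / (y - z)) \<longlongrightarrow> of_int (Min (act S c z))) (at_right z)"
proof (rule tendsto_eventually)
  show "eventually (\<lambda>y. (F y - F z) / (y - z) = of_int (Min (act S c z))) (at_right z)"
    unfolding eventually_at_filter
    by (rule eventually_mono[OF locF[OF assms]]) auto
qed

lemma mult_eq:
  assumes S: "finite S" "S \<noteq> {}" and rep: "\<forall>z\<in>{al..be}. F z = mn S c z"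
    and z: "z \<in> {al<..<be}"
  shows "multiplicity_at F z = of_int (Max (act S c z)) - of_int (Min (act S c z))"
  unfolding multiplicity_at_def left_deriv_def right_deriv_def
  using tendsto_Lim[OF _ quot_left[OF assms]] tendsto_Lim[OF _ quot_right[OF assms]] by simp

lemma diff_imp:
  assumes S: "finite S" "S \<noteq> {}" and rep: "\<forall>z\<in>{al..be}. F z = mn S c z"
    and z: "z \<in> {al<..<be}" and d: "F differentiable (at z)"
  shows "Max (act S c z) = Min (act S c z)"
proof -
  obtain D where "(F has_real_derivative D) (at z)" using d by (auto simp: real_differentiable_def)
  hence "((\<lambda>y. (F y - F z) / (y - z)) \<longlongrightarrow> D) (at z)" by (simp add: has_field_derivative_iff)
  hence l: "((\<lambda>y. (F y - F z) / (y - z)) \<longlongrightarrow> D) (at_left z)"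
    and r: "((\<lambda>y. (F y - F z) / (y - z)) \<longlongrightarrow> D) (at_right z)"
    using filterlim_at_split by blast+
  have "D = of_int (Max (act S c z))"
    using tendsto_unique[OF _ l quot_left[OF assms(1-4)]] by simp
  moreover have "D = of_int (Min (act S c z))"
    using tendsto_unique[OF _ r quot_right[OF assms(1-4)]] by simp
  ultimately show ?thesis by simp
qed

lemma imp_diff:
  assumes S: "finite S" "S \<noteq> {}" and rep: "\<forall>z\<in>{al..be}. F z = mn S c z"
    and z: "z \<in> {al<..<be}" and e: "Max (act S c z) = Min (act S c z)"
  shows "F differentiable (at z)"
proof -
  have ev: "eventually (\<lambda>y. F y = F z + (y - z) * of_int (Max (act S c z))) (nhds z)"
    by (rule eventually_mono[OF locF[OF S rep z]]) (use e in auto)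
  have "((\<lambda>y. F z + (y - z) * of_int (Max (act S c z))) has_real_derivative of_int (Max (act S c z))) (at z)"
    by (auto intro!: derivative_eq_intros)
  hence "(F has_real_derivative of_int (Max (act S c z))) (at z)"
    using DERIV_cong_ev[OF refl ev refl] by simp
  thus ?thesis by (auto simp: real_differentiable_def)
qed



locale rp =
  fixes al be :: real and F :: "real \<Rightarrow> real" and S :: "int set" and c :: "int \<Rightarrow> real"
  assumes lt: "al < be" and fin: "finite S" and ne: "S \<noteq> {}"
    and rep: "\<forall>z\<in>{al..be}. F z = mn S c z"
    and Fal: "F al = 0" and Fbe: "F be = 0"
begin

abbreviation "a \<equiv> canon_coeff al be F"

lemma F_le: "z \<in> {al..be} \<Longrightarrow> u \<in> S \<Longrightarrow> F z \<le> c u + z * of_int u"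
  using rep mn_le[OF fin] by auto

lemma bdd: "bdd_above ((\<lambda>y. F y - y * of_int v) ` {al..be})"
proof -
  obtain u0 where u0: "u0 \<in> S" using ne by auto
  have "\<forall>y\<in>{al..be}. F y - y * of_int v \<le> c u0 + (\<bar>al\<bar> + \<bar>be\<bar>) * \<bar>of_int u0 - of_int v\<bar>"
  proof
    fix y assume y: "y \<in> {al..be}"
    have "F y \<le> c u0 + y * of_int u0" using F_le[OF y u0] .
    moreover have "y * (of_int u0 - of_int v) \<le> \<bar>y\<bar> * \<bar>of_int u0 - of_int v\<bar>"
      by (metis abs_ge_self abs_mult)
    moreover have "\<bar>y\<bar> * \<bar>of_int u0 - of_int v\<bar> \<le> (\<bar>al\<bar> + \<bar>be\<bar>) * \<bar>of_int u0 - of_int v\<bar>"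
      using y by (intro mult_right_mono) auto
    ultimately show "F y - y * of_int v \<le> c u0 + (\<bar>al\<bar> + \<bar>be\<bar>) * \<bar>of_int u0 - of_int v\<bar>"
      by (simp add: algebra_simps)
  qed
  thus ?thesis by (intro bdd_aboveI2) blast
qed

lemma a_ge: "z \<in> {al..be} \<Longrightarrow> F z - z * of_int v \<le> a v"
  unfolding canon_coeff_def by (rule cSUP_upper[OF _ bdd])

lemma a_ge': "z \<in> {al..be} \<Longrightarrow> F z \<le> a v + z * of_int v"
  using a_ge[of z v] by simp

lemma a_le_gen: "(\<And>y. y \<in> {al..be} \<Longrightarrow> F y - y * of_int v \<le> B) \<Longrightarrow> a v \<le> B"
  unfolding canon_coeff_def using lt by (intro cSUP_least) auto

lemma a_le_c: "v \<in> S \<Longrightarrow> a v \<le> c v"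
  by (rule a_le_gen) (use F_le in force)

lemma a_act: "z \<in> {al..be} \<Longrightarrow> v \<in> act S c z \<Longrightarrow> a v + z * of_int v = F z"
proof -
  assume z: "z \<in> {al..be}" and v: "v \<in> act S c z"
  have "c v + z * of_int v = F z" using v rep z unfolding act_def by auto
  moreover have "a v \<le> c v" using v act_sub by (intro a_le_c) auto
  ultimately show ?thesis using a_ge'[OF z, of v] by linarith
qed

lemma a_high: assumes "Max S \<le> v" shows "a v = - al * of_int v"
proof (rule antisym)
  obtain u0 where u0: "u0 \<in> act S c al" using act_ne[OF fin ne] by auto
  have c0: "c u0 + al * of_int u0 = 0" using a_act[of al u0] u0 Fal lt a_le_c act_sub
    using rep unfolding act_def by auto
  have u0le: "u0 \<le> v" using u0 act_sub fin assms by (meson Max_ge order_trans subsetD)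
  show "a v \<le> - al * of_int v"
  proof (rule a_le_gen)
    fix y assume y: "y \<in> {al..be}"
    have "u0 \<in> S" using u0 act_sub by blast
    hence "F y \<le> c u0 + y * of_int u0" using F_le[OF y] by auto
    also have "\<dots> = (y - al) * of_int u0" using c0 by (simp add: algebra_simps)
    also have "\<dots> \<le> (y - al) * of_int v" using y u0le by (intro mult_left_mono) auto
    finally show "F y - y * of_int v \<le> - al * of_int v" by (simp add: algebra_simps)
  qed
  show "- al * of_int v \<le> a v" using a_ge[of al v] lt Fal by simp
qed

lemma a_low: assumes "v \<le> Min S" shows "a v = - be * of_int v"
proof (rule antisym)
  obtain u0 where u0: "u0 \<in> act S c be" using act_ne[OF fin ne] by auto
  have c0: "c u0 + be * of_int u0 = 0" using u0 Fbe lt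
    using rep unfolding act_def by auto
  have u0le: "v \<le> u0" using u0 act_sub fin assms by (meson Min_le order_trans subsetD)
  show "a v \<le> - be * of_int v"
  proof (rule a_le_gen)
    fix y assume y: "y \<in> {al..be}"
    have "u0 \<in> S" using u0 act_sub by blast
    hence "F y \<le> c u0 + y * of_int u0" using F_le[OF y] by auto
    also have "\<dots> = (be - y) * (- of_int u0)" using c0 by (simp add: algebra_simps)
    also have "\<dots> \<le> (be - y) * (- of_int v)" using y u0le by (intro mult_left_mono) auto
    finally show "F y - y * of_int v \<le> - be * of_int v" by (simp add: algebra_simps)
  qed
  show "- be * of_int v \<le> a v" using a_ge[of be v] lt Fbe by simp
qed

lemma a_conv: "2 * a v \<le> a (v - 1) + a (v + 1)"
proof -
  have "a v \<le> (a (v - 1) + a (v + 1)) / 2"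
  proof (rule a_le_gen)
    fix y assume y: "y \<in> {al..be}"
    have "F y - y * of_int (v - 1) \<le> a (v - 1)" "F y - y * of_int (v + 1) \<le> a (v + 1)"
      by (rule a_ge[OF y])+
    thus "F y - y * of_int v \<le> (a (v - 1) + a (v + 1)) / 2" by (simp add: algebra_simps)
  qed
  thus ?thesis by simp
qed

lemma a_mid:
  assumes z: "z \<in> {al..be}" and l: "a l + z * of_int l = F z" and r: "a r + z * of_int r = F z"
    and v: "l \<le> v" "v \<le> r"
  shows "a v + z * of_int v = F z"
proof -
  have "a v \<le> F z - z * of_int v"
  proof (rule a_le_gen)
    fix y assume y: "y \<in> {al..be}"
    show "F y - y * of_int v \<le> F z - z * of_int v"
    proof (cases "z \<le> y")
      case True
      have "F y - y * of_int l \<le> a l" using a_ge[OF y] .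
      moreover have "(y - z) * of_int l \<le> (y - z) * of_int v" using True v by (intro mult_left_mono) auto
      ultimately show ?thesis using l by (simp add: algebra_simps)
    next
      case False
      have "F y - y * of_int r \<le> a r" using a_ge[OF y] .
      moreover have "(z - y) * of_int v \<le> (z - y) * of_int r" using False v by (intro mult_left_mono) auto
      ultimately show ?thesis using r by (simp add: algebra_simps)
    qed
  qed
  thus ?thesis using a_ge'[OF z, of v] by simp
qed

lemma a_out_hi:
  assumes z: "z \<in> {al<..<be}" and v: "Max (act S c z) < v"
  shows "F z < a v + z * of_int v"
proof -
  let ?R = "of_int (Max (act S c z)) :: real"
  have e1: "eventually (\<lambda>y. F y = F z + (y - z) * ?R) (at_left z)"
    unfolding eventually_at_filter
    by (rule eventually_mono[OF locF[OF fin ne rep z]]) auto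
  have e2: "eventually (\<lambda>y. y \<in> {al<..<z}) (at_left z)"
    using z by (intro eventually_at_left_real) auto
  obtain y where y: "F y = F z + (y - z) * ?R" "y \<in> {al<..<z}"
    using eventually_happens[OF eventually_conj[OF e1 e2]] by auto
  have yO: "y \<in> {al..be}" using y z by auto
  have "F y - y * of_int v \<le> a v" using a_ge[OF yO] .
  moreover have "0 < (z - y) * (of_int v - ?R)" using y v by (intro mult_pos_pos) auto
  ultimately show ?thesis using y by (simp add: algebra_simps)
qed

lemma a_out_lo:
  assumes z: "z \<in> {al<..<be}" and v: "v < Min (act S c z)"
  shows "F z < a v + z * of_int v"
proof -
  let ?L = "of_int (Min (act S c z)) :: real"
  have e1: "eventually (\<lambda>y. F y = F z + (y - z) * ?L) (at_right z)"
    unfolding eventually_at_filter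
    by (rule eventually_mono[OF locF[OF fin ne rep z]]) auto
  have e2: "eventually (\<lambda>y. y \<in> {z<..<be}) (at_right z)"
    using z by (intro eventually_at_right_real) auto
  obtain y where y: "F y = F z + (y - z) * ?L" "y \<in> {z<..<be}"
    using eventually_happens[OF eventually_conj[OF e1 e2]] by auto
  have yO: "y \<in> {al..be}" using y z by auto
  have "F y - y * of_int v \<le> a v" using a_ge[OF yO] .
  moreover have "0 < (y - z) * (?L - of_int v)" using y v by (intro mult_pos_pos) auto
  ultimately show ?thesis using y by (simp add: algebra_simps)
qed

end



lemma INF_red:
  fixes f :: "int \<Rightarrow> real"
  assumes "finite T" "T \<noteq> {}" "T \<subseteq> X" "\<And>x. x \<in> X \<Longrightarrow> \<exists>t\<in>T. f t \<le> f x"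
  shows "(INF x\<in>X. f x) = Min (f ` T)"
proof (rule cInf_eq_minimum)
  have "Min (f ` T) \<in> f ` T" using assms by (intro Min_in) auto
  thus "Min (f ` T) \<in> f ` X" using assms(3) by blast
  fix y assume "y \<in> f ` X"
  then obtain x where x: "x \<in> X" "y = f x" by auto
  obtain t where "t \<in> T" "f t \<le> f x" using assms(4)[OF x(1)] by auto
  moreover have "Min (f ` T) \<le> f t" using \<open>t \<in> T\<close> assms(1) by auto
  ultimately show "Min (f ` T) \<le> y" using x by auto
qed

lemma conv_up:
  fixes G :: "int \<Rightarrow> real"
  assumes cv: "\<And>v. 2 * G v \<le> G (v - 1) + G (v + 1)" and b: "G w < G (w + 1)"
  shows "G (w + int k) < G (w + int k + 1)"
proof (induction k)
  case 0 thus ?case using b by simp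
next
  case (Suc k)
  have "2 * G (w + int k + 1) \<le> G (w + int k) + G (w + int k + 2)"
    using cv[of "w + int k + 1"] by (simp add: algebra_simps)
  thus ?case using Suc by (simp add: algebra_simps)
qed

lemma conv_up2:
  fixes G :: "int \<Rightarrow> real"
  assumes cv: "\<And>v. 2 * G v \<le> G (v - 1) + G (v + 1)" and b: "G w < G (w + 1)"
  shows "G (w + 1) < G (w + 2 + int k)"
proof (induction k)
  case 0 thus ?case using conv_up[OF cv b, of 1] by (simp add: add.commute add.left_commute)
next
  case (Suc k)
  have "G (w + int (k + 2)) < G (w + int (k + 2) + 1)" by (rule conv_up[OF cv b])
  thus ?case using Suc by (simp add: algebra_simps)
qed

lemma conv_dn2:
  fixes G :: "int \<Rightarrow> real"
  assumes cv: "\<And>v. 2 * G v \<le> G (v - 1) + G (v + 1)" and b: "G w < G (w - 1)"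
  shows "G (w - 1) < G (w - 2 - int k)"
proof -
  define H where "H v = G (- v)" for v
  have cvH: "2 * H v \<le> H (v - 1) + H (v + 1)" for v
  proof -
    have e: "- (v - 1) = - v + 1" "- (v + 1) = - v - 1" by simp_all
    show ?thesis unfolding H_def e using cv[of "- v"] by linarith
  qed
  have bH: "H (- w) < H (- w + 1)" using b unfolding H_def by (simp add: algebra_simps)
  have "H (- w + 1) < H (- w + 2 + int k)" by (rule conv_up2[OF cvH bH])
  thus ?thesis unfolding H_def by (simp add: algebra_simps)
qed



locale gs = rp +
  fixes p :: real
  assumes nn: "\<forall>z\<in>{al..be}. 0 \<le> F z"
    and spread: "\<forall>z\<in>{al<..<be}. Max (act S c z) - Min (act S c z) \<le> 2"
    and p: "p \<in> {al<..<be}"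
    and dif: "F differentiable (at p)"
begin

definition "w = Max (act S c p)"

lemma actp: "act S c p = {w}"
proof -
  have e: "Max (act S c p) = Min (act S c p)" by (rule diff_imp[OF fin ne rep p dif])
  have f: "finite (act S c p)" "act S c p \<noteq> {}" using act_fin[OF fin] act_ne[OF fin ne] by auto
  show ?thesis
  proof (intro equalityI subsetI)
    fix x assume "x \<in> act S c p"
    hence "x \<le> Max (act S c p)" "Min (act S c p) \<le> x" using f by auto
    thus "x \<in> {w}" using e unfolding w_def by auto
  next
    fix x assume "x \<in> {w}" thus "x \<in> act S c p" using f unfolding w_def by auto
  qed
qed

lemma wS: "w \<in> S" using actp act_sub by blast

lemma pO: "p \<in> {al..be}" using p by auto

lemma gw: "a w + p * of_int w = F p" using a_act[OF pO] actp by auto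

lemma gnw: "v \<noteq> w \<Longrightarrow> F p < a v + p * of_int v"
proof -
  assume "v \<noteq> w"
  hence "w < v \<or> v < w" by auto
  thus ?thesis
  proof
    assume "w < v" thus ?thesis using a_out_hi[OF p] actp by simp
  next
    assume "v < w" thus ?thesis using a_out_lo[OF p] actp by simp
  qed
qed

lemma the_w: "(THE w'. eventually (\<lambda>z. F z = a w' + z * of_int w') (nhds p)) = w"
proof (rule the_equality)
  show ev: "eventually (\<lambda>z. F z = a w + z * of_int w) (nhds p)"
  proof (rule eventually_mono[OF locF[OF fin ne rep p]])
    fix y assume y: "F y = F p + (y - p) * (if y \<le> p then of_int (Max (act S c p)) else of_int (Min (act S c p)))"
    have "Max (act S c p) = w" "Min (act S c p) = w" using actp by auto
    hence "F y = F p + (y - p) * of_int w" using y by simp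
    thus "F y = a w + y * of_int w" using gw by (simp add: algebra_simps)
  qed
  fix w' assume "eventually (\<lambda>z. F z = a w' + z * of_int w') (nhds p)"
  with ev have "eventually (\<lambda>z. a w + z * of_int w = a w' + z * of_int w') (nhds p)"
    by eventually_elim auto
  then obtain d where d: "d > 0" "\<And>y. dist y p < d \<Longrightarrow> a w + y * of_int w = a w' + y * of_int w'"
    unfolding eventually_nhds_metric by auto
  have 1: "a w + p * of_int w = a w' + p * of_int w'" using d by auto
  have 2: "a w + (p + d/2) * of_int w = a w' + (p + d/2) * of_int w'" using d by (intro d(2)) (simp add: dist_real_def)
  have "a w + (p + d/2) * of_int w - (a w + p * of_int w) = a w' + (p + d/2) * of_int w' - (a w' + p * of_int w')"
    using 1 2 by simp
  hence "(d/2) * of_int w = (d/2) * of_int w'" by (simp add: algebra_simps)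
  thus "w' = w" using d by simp
qed

definition "U = Max S"
definition "L = Min S"
definition "S' = {L - 1..U + 1}"

lemma wLU: "L \<le> w" "w \<le> U" using wS fin unfolding L_def U_def by auto

lemma S'fin: "finite S'" unfolding S'_def by auto
lemma SS': "S \<subseteq> S'"
proof
  fix x assume "x \<in> S"
  hence "Min S \<le> x" "x \<le> Max S" using fin by auto
  thus "x \<in> S'" unfolding S'_def L_def U_def by auto
qed
lemma U1: "U + 1 \<in> S'" "U + 1 \<noteq> w" using wLU SS' wS unfolding S'_def by auto
lemma L1: "L - 1 \<in> S'" "L - 1 \<noteq> w" using wLU SS' wS unfolding S'_def by auto

lemma cover_hi: "z \<in> {al..be} \<Longrightarrow> U + 1 < v \<Longrightarrow> a (U + 1) + z * of_int (U + 1) \<le> a v + z * of_int v"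
proof -
  assume z: "z \<in> {al..be}" and v: "U + 1 < v"
  have "a (U + 1) = - al * of_int (U + 1)" "a v = - al * of_int v"
    using v by (intro a_high; simp add: U_def)+
  moreover have "(z - al) * of_int (U + 1) \<le> (z - al) * of_int v" using z v by (intro mult_left_mono) auto
  ultimately show ?thesis by (simp add: algebra_simps)
qed

lemma cover_lo: "z \<in> {al..be} \<Longrightarrow> v < L - 1 \<Longrightarrow> a (L - 1) + z * of_int (L - 1) \<le> a v + z * of_int v"
proof -
  assume z: "z \<in> {al..be}" and v: "v < L - 1"
  have "a (L - 1) = - be * of_int (L - 1)" "a v = - be * of_int v"
    using v by (intro a_low; simp add: L_def)+
  moreover have "(be - z) * of_int v \<le> (be - z) * of_int (L - 1)" using z v by (intro mult_left_mono) auto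
  ultimately show ?thesis by (simp add: algebra_simps)
qed

definition "m = (INF v\<in>UNIV - {w}. a v + p * of_int v)"

lemma m_eq: "m = Min ((\<lambda>v. a v + p * of_int v) ` (S' - {w}))"
  unfolding m_def
proof (rule INF_red)
  show "finite (S' - {w})" using S'fin by auto
  show "S' - {w} \<noteq> {}" using U1 by auto
  show "S' - {w} \<subseteq> UNIV - {w}" by auto
  fix x assume x: "x \<in> UNIV - {w}"
  show "\<exists>t\<in>S' - {w}. a t + p * of_int t \<le> a x + p * of_int x"
  proof (cases "x \<in> S'")
    case True thus ?thesis using x by auto
  next
    case False
    hence "U + 1 < x \<or> x < L - 1" unfolding S'_def by auto
    thus ?thesis using cover_hi[OF pO] cover_lo[OF pO] U1 L1 by blast
  qed
qed

lemma m_gt: "F p < m"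
proof -
  have "finite ((\<lambda>v. a v + p * of_int v) ` (S' - {w}))" "(\<lambda>v. a v + p * of_int v) ` (S' - {w}) \<noteq> {}"
    using S'fin U1 by auto
  moreover have "\<forall>x\<in>(\<lambda>v. a v + p * of_int v) ` (S' - {w}). F p < x" using gnw by auto
  ultimately show ?thesis unfolding m_eq by (simp add: Min_gr_iff)
qed

definition "b = a(w := m - p * of_int w)"

lemma b_gt: "a w < b w" using m_gt gw unfolding b_def by simp
lemma b_ge: "a v \<le> b v" using b_gt unfolding b_def by (cases "v = w") auto
lemma b_ne: "v \<noteq> w \<Longrightarrow> b v = a v" unfolding b_def by simp

definition "H = (\<lambda>z. INF v. b v + z * of_int v)"

lemma H_eq: "z \<in> {al..be} \<Longrightarrow> H z = mn S' b z"
  unfolding H_def mn_def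
proof (rule INF_red)
  assume z: "z \<in> {al..be}"
  show "finite S'" "S' \<noteq> {}" "S' \<subseteq> UNIV" using S'fin U1 by auto
  fix x
  show "\<exists>t\<in>S'. b t + z * of_int t \<le> b x + z * of_int x"
  proof (cases "x \<in> S'")
    case True thus ?thesis by auto
  next
    case False
    hence xw: "x \<noteq> w" using wS SS' by auto
    from False have "U + 1 < x \<or> x < L - 1" unfolding S'_def by auto
    thus ?thesis using cover_hi[OF z] cover_lo[OF z] U1 L1 b_ne xw by metis
  qed
qed

lemma H_ge: "z \<in> {al..be} \<Longrightarrow> F z \<le> H z"
proof -
  assume z: "z \<in> {al..be}"
  obtain v where "v \<in> S'" "mn S' b z = b v + z * of_int v" using mn_in[OF S'fin] U1 by blast
  moreover have "F z \<le> a v + z * of_int v" by (rule a_ge'[OF z])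
  ultimately show ?thesis using H_eq[OF z] b_ge[of v] by simp
qed

lemma H_al: "H al = 0"
proof -
  have alO: "al \<in> {al..be}" using lt by auto
  have "H al \<le> b (U + 1) + al * of_int (U + 1)" using H_eq[OF alO] mn_le[OF S'fin U1(1)] by simp
  also have "\<dots> = 0" using b_ne[OF U1(2)] a_high[of "U + 1"] unfolding U_def by simp
  finally show ?thesis using H_ge[OF alO] Fal by simp
qed

lemma H_be: "H be = 0"
proof -
  have beO: "be \<in> {al..be}" using lt by auto
  have "H be \<le> b (L - 1) + be * of_int (L - 1)" using H_eq[OF beO] mn_le[OF S'fin L1(1)] by simp
  also have "\<dots> = 0" using b_ne[OF L1(2)] a_low[of "L - 1"] unfolding L_def by simp
  finally show ?thesis using H_ge[OF beO] Fbe by simp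
qed

lemma H_spread_aux:
  assumes z: "z \<in> {al<..<be}"
  shows "\<exists>k. act S' b z \<subseteq> {k..k+2}"
proof -
  have zO: "z \<in> {al..be}" using z by auto
  define l where "l = Min (act S c z)"
  define r where "r = Max (act S c z)"
  have fa: "finite (act S c z)" "act S c z \<noteq> {}" using act_fin[OF fin] act_ne[OF fin ne] by auto
  have lA: "l \<in> act S c z" and rA: "r \<in> act S c z" using fa unfolding l_def r_def by auto
  have lr: "r - l \<le> 2" "l \<le> r" using spread z fa unfolding l_def r_def by auto
  have lS: "l \<in> S" "r \<in> S" using lA rA act_sub by auto
  have lS': "l \<in> S'" "r \<in> S'" using lS SS' by auto
  have gl: "a l + z * of_int l = F z" and gr: "a r + z * of_int r = F z"
    using a_act[OF zO] lA rA by auto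
  have gin: "\<And>v. l \<le> v \<Longrightarrow> v \<le> r \<Longrightarrow> a v + z * of_int v = F z"
    using a_mid[OF zO gl gr] by auto
  have gout: "\<And>v. v < l \<or> r < v \<Longrightarrow> F z < a v + z * of_int v"
    using a_out_hi[OF z] a_out_lo[OF z] unfolding l_def r_def by auto
  have Hz: "H z = mn S' b z" using H_eq[OF zO] .
  have Bd: "\<And>v. v \<in> act S' b z \<Longrightarrow> v \<in> S' \<and> b v + z * of_int v = H z"
    unfolding act_def using Hz by auto
  show ?thesis
  proof (cases "\<exists>v0. l \<le> v0 \<and> v0 \<le> r \<and> v0 \<noteq> w")
    case True
    then obtain v0 where v0: "l \<le> v0" "v0 \<le> r" "v0 \<noteq> w" by auto
    have v0S: "v0 \<in> S'" using v0 lS' unfolding S'_def by auto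
    have "H z \<le> b v0 + z * of_int v0" using Hz mn_le[OF S'fin v0S] by simp
    hence HF: "H z = F z" using b_ne[OF v0(3)] gin[OF v0(1,2)] H_ge[OF zO] by simp
    have "act S' b z \<subseteq> {l..l+2}"
    proof
      fix v assume "v \<in> act S' b z"
      hence v: "b v + z * of_int v = F z" using Bd HF by auto
      have vw: "v \<noteq> w"
      proof
        assume "v = w"
        thus False using v b_gt a_ge'[OF zO, of w] by simp
      qed
      hence "a v + z * of_int v = F z" using v b_ne by simp
      hence "\<not> (v < l \<or> r < v)" using gout by fastforce
      hence "l \<le> v \<and> v \<le> r" by simp
      thus "v \<in> {l..l+2}" using lr by auto
    qed
    thus ?thesis by blast
  next
    case False
    hence lw: "l = w" "r = w" using lr by auto
    have cv: "\<And>v. 2 * (a v + z * of_int v) \<le> (a (v - 1) + z * of_int (v - 1)) + (a (v + 1) + z * of_int (v + 1))"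
      using a_conv by (simp add: algebra_simps)
    have up: "a w + z * of_int w < a (w + 1) + z * of_int (w + 1)"
      using gout[of "w + 1"] gin[of w] lw by auto
    have dn: "a w + z * of_int w < a (w - 1) + z * of_int (w - 1)"
      using gout[of "w - 1"] gin[of w] lw by auto
    have w1S: "w + 1 \<in> S'" "w - 1 \<in> S'" using wLU unfolding S'_def by auto
    have "act S' b z \<subseteq> {w - 1..w - 1 + 2}"
    proof
      fix v assume "v \<in> act S' b z"
      hence v: "b v + z * of_int v = H z" using Bd by auto
      show "v \<in> {w - 1..w - 1 + 2}"
      proof (rule ccontr)
        assume "v \<notin> {w - 1..w - 1 + 2}"
        hence "w + 2 \<le> v \<or> v \<le> w - 2" by auto
        thus False
        proof
          assume h: "w + 2 \<le> v"
          have "v = w + 2 + int (nat (v - w - 2))" using h by simp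
          then obtain k where k: "v = w + 2 + int k" by blast
          have "a (w + 1) + z * of_int (w + 1) < a (w + 2 + int k) + z * of_int (w + 2 + int k)"
            by (rule conv_up2[where G="\<lambda>v. a v + z * of_int v", OF cv up])
          moreover have "H z \<le> b (w + 1) + z * of_int (w + 1)" using Hz mn_le[OF S'fin w1S(1)] by simp
          ultimately show False using v k b_ne[of v] b_ne[of "w + 1"] h by simp
        next
          assume h: "v \<le> w - 2"
          have "v = w - 2 - int (nat (w - 2 - v))" using h by simp
          then obtain k where k: "v = w - 2 - int k" by blast
          have "a (w - 1) + z * of_int (w - 1) < a (w - 2 - int k) + z * of_int (w - 2 - int k)"
            by (rule conv_dn2[where G="\<lambda>v. a v + z * of_int v", OF cv dn])
          moreover have "H z \<le> b (w - 1) + z * of_int (w - 1)" using Hz mn_le[OF S'fin w1S(2)] by simp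
          ultimately show False using v k b_ne[of v] b_ne[of "w - 1"] h by simp
        qed
      qed
    qed
    thus ?thesis by blast
  qed
qed

lemma H_spread: "z \<in> {al<..<be} \<Longrightarrow> Max (act S' b z) - Min (act S' b z) \<le> 2"
proof -
  assume z: "z \<in> {al<..<be}"
  obtain k where k: "act S' b z \<subseteq> {k..k+2}" using H_spread_aux[OF z] by blast
  have "S' \<noteq> {}" using U1 by auto
  hence fa: "finite (act S' b z)" "act S' b z \<noteq> {}" using act_fin[OF S'fin] act_ne[OF S'fin] by auto
  have "Max (act S' b z) \<in> act S' b z" "Min (act S' b z) \<in> act S' b z" using fa by auto
  hence "Max (act S' b z) \<in> {k..k+2}" "Min (act S' b z) \<in> {k..k+2}" using k by blast+
  thus ?thesis by simp
qed

lemma G_eq: "G_op al be p F = H"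
  using dif unfolding G_op_def H_def b_def m_def Let_def the_w by simp

end



definition Inv :: "real \<Rightarrow> real \<Rightarrow> (real \<Rightarrow> real) \<Rightarrow> bool" where
  "Inv al be F \<longleftrightarrow> (\<exists>S c. rp al be F S c \<and> (\<forall>z\<in>{al..be}. 0 \<le> F z) \<and>
      (\<forall>z\<in>{al<..<be}. Max (act S c z) - Min (act S c z) \<le> 2))"

lemma Inv_step:
  assumes I: "Inv al be F" and p: "p \<in> {al<..<be}"
  shows "Inv al be (G_op al be p F)"
proof (cases "F differentiable (at p)")
  case False
  thus ?thesis using I unfolding G_op_def by simp
next
  case True
  from I obtain S c where r: "rp al be F S c" and nn: "\<forall>z\<in>{al..be}. 0 \<le> F z"
    and sp: "\<forall>z\<in>{al<..<be}. Max (act S c z) - Min (act S c z) \<le> 2"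
    unfolding Inv_def by blast
  interpret g: gs al be F S c p
    using r nn sp p True by (simp add: gs_def gs_axioms_def)
  have "rp al be g.H g.S' g.b"
  proof
    show "al < be" by (rule g.lt)
    show "finite g.S'" by (rule g.S'fin)
    show "g.S' \<noteq> {}" using g.U1 by auto
    show "\<forall>z\<in>{al..be}. g.H z = mn g.S' g.b z" using g.H_eq by auto
    show "g.H al = 0" by (rule g.H_al)
    show "g.H be = 0" by (rule g.H_be)
  qed
  moreover have "\<forall>z\<in>{al..be}. 0 \<le> g.H z"
  proof
    fix z assume z: "z \<in> {al..be}"
    have "F z \<le> g.H z" by (rule g.H_ge[OF z])
    moreover have "0 \<le> F z" using nn z by blast
    ultimately show "0 \<le> g.H z" by linarith
  qed
  moreover have "\<forall>z\<in>{al<..<be}. Max (act g.S' g.b z) - Min (act g.S' g.b z) \<le> 2"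
    using g.H_spread by auto
  ultimately show ?thesis unfolding Inv_def g.G_eq by blast
qed

lemma Inv_fold:
  "Inv al be F \<Longrightarrow> \<forall>q\<in>set qs. q \<in> {al<..<be} \<Longrightarrow> Inv al be (fold (G_op al be) qs F)"
proof (induction qs arbitrary: F)
  case Nil thus ?case by simp
next
  case (Cons q qs)
  have "Inv al be (G_op al be q F)" using Inv_step Cons.prems by auto
  thus ?case using Cons by simp
qed

lemma Inv_init: "al < be \<Longrightarrow> Inv al be (\<lambda>z. 0)"
proof -
  assume lt: "al < be"
  have mn0: "mn {0} (\<lambda>_. 0) z = 0" for z unfolding mn_def by simp
  have act0: "act {0} (\<lambda>_. 0) z = {0}" for z unfolding act_def mn0 by auto
  have r: "rp al be (\<lambda>z. 0) {0} (\<lambda>_. 0)"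
    unfolding rp_def using lt mn0 by simp
  have "\<forall>z\<in>{al<..<be}. Max (act {0} (\<lambda>_. 0) z) - Min (act {0} (\<lambda>_. 0) z) \<le> 2"
    unfolding act0 by simp
  thus ?thesis unfolding Inv_def using r by auto
qed

lemma Inv_final:
  assumes I: "Inv al be F"
  shows "trop_poly al be F \<and> (\<forall>h\<in>nonsmooth_pts al be F. multiplicity_at F h \<le> 2)"
proof -
  from I obtain S c where r: "rp al be F S c" and nn: "\<forall>z\<in>{al..be}. 0 \<le> F z"
    and sp: "\<forall>z\<in>{al<..<be}. Max (act S c z) - Min (act S c z) \<le> 2"
    unfolding Inv_def by blast
  interpret rp al be F S c by (rule r)
  have ts: "trop_series al be F"
    unfolding trop_series_def
  proof (intro conjI)
    show "F al = 0" by (rule Fal)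
    show "F be = 0" by (rule Fbe)
    show "\<forall>z\<in>{al..be}. 0 \<le> F z" by (rule nn)
    show "\<exists>a :: int \<Rightarrow> real. \<forall>z\<in>{al..be}. bdd_below (range (\<lambda>v. a v + z * of_int v)) \<and>
        F z = (INF v. a v + z * of_int v)"
    proof (rule exI[where x="canon_coeff al be F"], intro ballI conjI)
      fix z assume z: "z \<in> {al..be}"
      have lb: "\<And>v. F z \<le> a v + z * of_int v" by (rule a_ge'[OF z])
      show "bdd_below (range (\<lambda>v. a v + z * of_int v))"
        by (rule bdd_belowI2[of _ "F z"]) (rule lb)
      obtain u where u: "u \<in> act S c z" using act_ne[OF fin ne] by blast
      show "F z = (INF v. a v + z * of_int v)"
      proof (rule cInf_eq_minimum[symmetric])
        show "F z \<in> range (\<lambda>v. a v + z * of_int v)" using a_act[OF z u] by (intro range_eqI[where x=u]) simp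
        fix x assume "x \<in> range (\<lambda>v. a v + z * of_int v)"
        then obtain v where "x = a v + z * of_int v" by blast
        thus "F z \<le> x" using lb by simp
      qed
    qed
  qed
  have sub: "nonsmooth_pts al be F \<subseteq> (\<lambda>(u, v). (c u - c v) / (of_int v - of_int u)) ` (S \<times> S)"
  proof
    fix h assume h: "h \<in> nonsmooth_pts al be F"
    hence hI: "h \<in> {al<..<be}" and nd: "\<not> F differentiable (at h)" unfolding nonsmooth_pts_def by auto
    have ne': "Max (act S c h) \<noteq> Min (act S c h)" using imp_diff[OF fin ne rep hI] nd by auto
    define u where "u = Min (act S c h)"
    define v where "v = Max (act S c h)"
    have fa: "finite (act S c h)" "act S c h \<noteq> {}" using act_fin[OF fin] act_ne[OF fin ne] by auto
    have uv: "u \<in> act S c h" "v \<in> act S c h" using fa unfolding u_def v_def by auto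
    have "c u + h * of_int u = c v + h * of_int v" using uv unfolding act_def by auto
    hence "h * (of_int v - of_int u) = c u - c v" by (simp add: algebra_simps)
    moreover have "(of_int v - of_int u :: real) \<noteq> 0" using ne' unfolding u_def v_def by simp
    ultimately have "h = (c u - c v) / (of_int v - of_int u)" by (simp add: field_simps)
    moreover have "(u, v) \<in> S \<times> S" using uv act_sub by auto
    ultimately show "h \<in> (\<lambda>(u, v). (c u - c v) / (of_int v - of_int u)) ` (S \<times> S)"
      by (intro image_eqI[where x="(u, v)"]) simp_all
  qed
  have "finite (nonsmooth_pts al be F)" by (rule finite_subset[OF sub]) (use fin in auto)
  hence "trop_poly al be F" using ts unfolding trop_poly_def by simp
  moreover have "\<forall>h\<in>nonsmooth_pts al be F. multiplicity_at F h \<le> 2"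
  proof
    fix h assume "h \<in> nonsmooth_pts al be F"
    hence hI: "h \<in> {al<..<be}" unfolding nonsmooth_pts_def by auto
    have "Max (act S c h) - Min (act S c h) \<le> 2" using sp hI by auto
    hence "real_of_int (Max (act S c h) - Min (act S c h)) \<le> 2" by linarith
    hence "(of_int (Max (act S c h)) - of_int (Min (act S c h)) :: real) \<le> 2"
      by simp
    thus "multiplicity_at F h \<le> 2" using mult_eq[OF fin ne rep hI] by simp
  qed
  ultimately show ?thesis by blast
qed

theorem mainTheorem4:
  fixes al be :: real and qs :: "real list"
  assumes "al < be"
    and "\<forall>q\<in>set qs. q \<in> {al<..<be}"
  defines "F \<equiv> fold (G_op al be) qs (\<lambda>z. 0)"
  shows "trop_poly al be F \<and> (\<forall>h\<in>nonsmooth_pts al be F. multiplicity_at F h \<le> 2)"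
  unfolding F_def by (rule Inv_final[OF Inv_fold[OF Inv_init[OF assms(1)] assms(2)]])


end
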